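(* Suppose $\xi$ is an $\mathcal{S}$-shrinking point of the map $f$, where $\mathcal{S}=\mathcal{F}[\ell,m,n]$. If $\sigma<1$, then $c>0$.
   Context: Fix $N\ge2$. For $\mu\in\mathbb{R}$ and a parameter $\xi$, $f(x)=A_Lx+B\mu$ if $e_1^{\mathsf T}x\le0$, $f(x)=A_Rx+B\mu$ if $e_1^{\mathsf T}x\ge0$, with $A_L,A_R$ real $N\times N$, $B\in\mathbb{R}^N$ and $A_R=A_L+Ce_1^{\mathsf T}$ for some $C$. $f^L(x)=A_Lx+B\mu$, $f^R(x)=A_Rx+B\mu$, $\varrho^{\mathsf T}=e_1^{\mathsf T}\mathrm{adj}(I-A_L)$. A periodic $\mathcal{S}:\mathbb{Z}\to\{L,R\}$ of period $n$ is identified with $\mathcal{S}_0\cdots\mathcal{S}_{n-1}$; indices mod $n$; $\mathcal{S}^{\overline j}$ differs from $\mathcal{S}$ exactly at indices $\equiv j$; $M_{\mathcal{S}}=A_{\mathcal{S}_{n-1}}\cdots A_{\mathcal{S}_0}$. An $\mathcal{S}$-cycle is $(x_0,\dots,x_{n-1})$ with $x_{(i+1)\bmod n}=f^{\mathcal{S}_i}(x_i)$; admissible if $e_1^{\mathsf T}x_i\le0$ whenever $\mathcal{S}_i=L$ and $\ge0$ whenever $\mathcal{S}_i=R$. $\mathcal{F}[\ell,m,n]_i=L$ if $im\bmod n<\ell$ and $R$ otherwise ($\ell<n$, $m<n$ positive, $\gcd(m,n)=1$); $d$ is the inverse of $m$ mod $n$. Shrinking point: with $\mu\ne0$, $\varrho^{\mathsf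 T}B\ne0$, $2\le\ell\le n-2$, $\xi$ is an $\mathcal{S}$-shrinking point if $\det(I-M_{\mathcal{S}^{\overline0}})\ne0$, $\det(I-M_{\mathcal{S}^{\overline{\ell d}}})\ne0$, the (unique) $\mathcal{S}^{\overline0}$-cycle is admissible and its first coordinates vanish exactly at indices $\equiv0$ and $\equiv\ell d$. At a shrinking point $M_{\mathcal{S}}$ has eigenvalue $1$ with algebraic multiplicity one; writing the eigenvalues of $M_{\mathcal{S}}$ (with multiplicity) as $\rho_1=1,\rho_2,\dots,\rho_N$, one sets $\sigma=\max_{2\le i\le N}|\rho_i|$ and $c=\prod_{i=2}^N(1-\rho_i)$ (the product of the nonzero eigenvalues of $I-M_{\mathcal{S}}$). *)

theory Defs
  imports "Jordan_Normal_Form.Char_Poly" "HOL-Computational_Algebra.Polynomial"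
begin

datatype side = L | R

definition opp_side :: "side \<Rightarrow> side" where
  "opp_side s = (case s of L \<Rightarrow> R | R \<Rightarrow> L)"

text \<open>Symbolic sequences: functions nat => side, only their values mod n matter
  (indices are always reduced mod the period n).\<close>

definition Fword :: "nat \<Rightarrow> nat \<Rightarrow> nat \<Rightarrow> nat \<Rightarrow> side" where
  "Fword l m n i = (if (i * m) mod n < l then L else R)"

definition flip_at :: "nat \<Rightarrow> (nat \<Rightarrow> side) \<Rightarrow> nat \<Rightarrow> nat \<Rightarrow> side" where
  "flip_at n S j i = (if i mod n = j mod n then opp_side (S i) else S i)"

definition Amat :: "real mat \<Rightarrow> real mat \<Rightarrow> side \<Rightarrow> real mat" where
  "Amat AL AR s = (case s of L \<Rightarrow> AL | R \<Rightarrow> AR)"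

fun Mprod :: "real mat \<Rightarrow> real mat \<Rightarrow> (nat \<Rightarrow> side) \<Rightarrow> nat \<Rightarrow> real mat" where
  "Mprod AL AR S 0 = 1\<^sub>m (dim_row AL)"
| "Mprod AL AR S (Suc k) = Amat AL AR (S k) * Mprod AL AR S k"

definition AR_of :: "nat \<Rightarrow> real mat \<Rightarrow> real vec \<Rightarrow> real mat" where
  "AR_of N AL C = AL + mat N N (\<lambda>(i,j). if j = 0 then C $ i else 0)"

definition rho_vec :: "nat \<Rightarrow> real mat \<Rightarrow> real vec" where
  "rho_vec N AL = row (adj_mat (1\<^sub>m N - AL)) 0"

definition is_cycle :: "nat \<Rightarrow> real mat \<Rightarrow> real mat \<Rightarrow> real vec \<Rightarrow> real \<Rightarrow> (nat \<Rightarrow> side) \<Rightarrow> nat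
    \<Rightarrow> (nat \<Rightarrow> real vec) \<Rightarrow> bool" where
  "is_cycle N AL AR B mu S n xs =
     (\<forall>i<n. xs i \<in> carrier_vec N \<and>
        xs (Suc i mod n) = Amat AL AR (S i) *\<^sub>v xs i + mu \<cdot>\<^sub>v B)"

definition admissible :: "(nat \<Rightarrow> side) \<Rightarrow> nat \<Rightarrow> (nat \<Rightarrow> real vec) \<Rightarrow> bool" where
  "admissible S n xs =
     (\<forall>i<n. (S i = L \<longrightarrow> xs i $ 0 \<le> 0) \<and> (S i = R \<longrightarrow> xs i $ 0 \<ge> 0))"

text \<open>xi = (A_L, C, B, mu) is an S-shrinking point (S of period n, parameters l, d).\<close>
definition shrinking_point :: "nat \<Rightarrow> real mat \<Rightarrow> real vec \<Rightarrow> real vec \<Rightarrow> real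
    \<Rightarrow> (nat \<Rightarrow> side) \<Rightarrow> nat \<Rightarrow> nat \<Rightarrow> nat \<Rightarrow> bool" where
  "shrinking_point N AL C B mu S l n d =
     (let AR = AR_of N AL C in
       mu \<noteq> 0 \<and> rho_vec N AL \<bullet> B \<noteq> 0 \<and> 2 \<le> l \<and> l + 2 \<le> n \<and>
       det (1\<^sub>m N - Mprod AL AR (flip_at n S 0) n) \<noteq> 0 \<and>
       det (1\<^sub>m N - Mprod AL AR (flip_at n S (l * d)) n) \<noteq> 0 \<and>
       (\<exists>xs. is_cycle N AL AR B mu (flip_at n S 0) n xs \<and>
             admissible (flip_at n S 0) n xs \<and>
             (\<forall>i<n. xs i $ 0 = 0 \<longleftrightarrow> (i = 0 \<or> i = (l * d) mod n))))"

definition other_eigs :: "real mat \<Rightarrow> complex multiset" where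
  "other_eigs M = proots (char_poly (map_mat complex_of_real M)) - {#1#}"

definition sigma_of :: "real mat \<Rightarrow> real" where
  "sigma_of M = Max (cmod ` set_mset (other_eigs M))"

definition c_of :: "real mat \<Rightarrow> complex" where
  "c_of M = prod_mset (image_mset (\<lambda>r. 1 - r) (other_eigs M))"

end

theory Submission
  imports Defs
begin

lemma cnj_comm_ring_hom: "comm_ring_hom (cnj :: complex \<Rightarrow> complex)"
  by unfold_locales auto

lemma order_cnj_le:
  fixes p :: "complex poly"
  assumes real: "map_poly cnj p = p" and p: "p \<noteq> 0"
  shows "order x p \<le> order (cnj x) p"
proof -
  interpret h: map_poly_comm_ring_hom cnj
    by (rule map_poly_comm_ring_hom.intro[OF cnj_comm_ring_hom])
  have "[:-x,1:]^(order x p) dvd p" by (simp add: order_divides)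
  hence "map_poly cnj ([:-x,1:]^(order x p)) dvd map_poly cnj p" by (rule h.hom_dvd)
  hence "[:-cnj x,1:]^(order x p) dvd p" using real by (simp add: h.hom_power)
  thus ?thesis using p by (simp add: order_divides)
qed

lemma order_cnj:
  fixes p :: "complex poly"
  assumes real: "map_poly cnj p = p" and p: "p \<noteq> 0"
  shows "order (cnj x) p = order x p"
  using order_cnj_le[OF assms, of x] order_cnj_le[OF assms, of "cnj x"] by simp

lemma prod_pos:
  fixes X :: "complex multiset"
  assumes "\<forall>x. count X (cnj x) = count X x" and "\<forall>x\<in>#X. cmod x < 1"
  shows "prod_mset (image_mset (\<lambda>r. 1 - r) X) \<in> \<real> \<and>
         Re (prod_mset (image_mset (\<lambda>r. 1 - r) X)) > 0"
  using assms
proof (induction "size X" arbitrary: X rule: less_induct)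
  case less
  show ?case
  proof (cases "X = {#}")
    case True then show ?thesis by simp
  next
    case False
    then obtain x where x: "x \<in># X" by blast
    have xl: "cmod x < 1" using less.prems x by auto
    show ?thesis
    proof (cases "cnj x = x")
      case True
      define X' where "X' = X - {#x#}"
      have XX: "X = add_mset x X'" using x unfolding X'_def by simp
      have inv: "\<forall>y. count X' (cnj y) = count X' y"
      proof
        fix y
        have "cnj y = x \<longleftrightarrow> y = x" using True by (metis complex_cnj_cnj)
        thus "count X' (cnj y) = count X' y" using less.prems(1) unfolding X'_def
          by (auto simp: count_diff)
      qed
      have IH: "prod_mset (image_mset (\<lambda>r. 1 - r) X') \<in> \<real> \<and>
         Re (prod_mset (image_mset (\<lambda>r. 1 - r) X')) > 0"
        using less.hyps[of X'] inv less.prems(2) XX by auto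
      have xr: "x \<in> \<real>" using True Reals_cnj_iff by blast
      have "Re x \<le> cmod x" by (rule complex_Re_le_cmod)
      hence f: "1 - x \<in> \<real>" "Re (1 - x) > 0" using xr xl by auto
      obtain a where a: "prod_mset (image_mset (\<lambda>r. 1 - r) X') = of_real a" using IH Reals_cases by blast
      obtain b where b: "1 - x = of_real b" using f Reals_cases by blast
      show ?thesis using IH f unfolding XX by (simp add: a b)
    next
      case False
      have c: "count X (cnj x) = count X x" using less.prems by auto
      have cx: "count X x \<ge> 1" using x by simp
      define X' where "X' = X - {#x, cnj x#}"
      have XX: "X = add_mset x (add_mset (cnj x) X')"
        unfolding X'_def
        by (rule multiset_eqI) (use c cx False in \<open>auto simp: count_diff\<close>)
      have inv: "\<forall>y. count X' (cnj y) = count X' y"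
      proof
        fix y
        have e1: "cnj y = x \<longleftrightarrow> y = cnj x" by auto
        have e2: "cnj y = cnj x \<longleftrightarrow> y = x" by auto
        show "count X' (cnj y) = count X' y" using less.prems(1) e1 e2 unfolding X'_def
          by (auto simp: count_diff)
      qed
      have IH: "prod_mset (image_mset (\<lambda>r. 1 - r) X') \<in> \<real> \<and>
         Re (prod_mset (image_mset (\<lambda>r. 1 - r) X')) > 0"
        using less.hyps[of X'] inv less.prems(2) XX by auto
      have "(1 - x) * (1 - cnj x) = of_real ((cmod (1 - x))^2)"
        using complex_norm_square[of "1 - x"] by simp
      moreover have "x \<noteq> 1" using xl by auto
      ultimately have f: "(1 - x) * (1 - cnj x) = of_real ((cmod (1 - x))^2)"
        "(cmod (1 - x))^2 > 0" by auto
      obtain a where a: "prod_mset (image_mset (\<lambda>r. 1 - r) X') = of_real a" using IH Reals_cases by blast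
      have "prod_mset (image_mset (\<lambda>r. 1 - r) X) = of_real ((cmod (1 - x))^2 * a)"
        unfolding XX using f(1) a by (simp add: mult.assoc[symmetric])
      thus ?thesis using f(2) IH a by simp
    qed
  qed
qed

lemma Mprod_carrier:
  assumes "AL \<in> carrier_mat N N" "AR \<in> carrier_mat N N"
  shows "Mprod AL AR S k \<in> carrier_mat N N"
proof (induction k)
  case 0 then show ?case using assms by simp
next
  case (Suc k)
  have "Amat AL AR (S k) \<in> carrier_mat N N" using assms by (cases "S k") (auto simp: Amat_def)
  then show ?case using Suc by simp
qed

lemma c_pos:
  assumes M: "M \<in> carrier_mat N N" and s: "sigma_of M < 1"
  shows "c_of M \<in> \<real> \<and> Re (c_of M) > 0"
proof -
  define P where "P = char_poly (map_mat complex_of_real M)"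
  have P: "P = map_poly complex_of_real (char_poly M)"
    unfolding P_def by (rule of_real_hom.char_poly_hom[OF M])
  have real: "map_poly cnj P = P"
    unfolding P by (intro poly_eqI) (auto simp: coeff_map_poly)
  have invP: "count (proots P) (cnj x) = count (proots P) x" for x
    by (cases "P = 0") (auto simp: order_cnj[OF real])
  have inv: "\<forall>x. count (other_eigs M) (cnj x) = count (other_eigs M) x"
  proof
    fix x
    have "cnj x = 1 \<longleftrightarrow> x = 1" by (metis complex_cnj_cnj complex_cnj_one)
    thus "count (other_eigs M) (cnj x) = count (other_eigs M) x"
      unfolding other_eigs_def P_def[symmetric] using invP[of x] by (auto simp: count_diff)
  qed
  have bnd: "\<forall>x\<in>#other_eigs M. cmod x < 1"
  proof
    fix x assume "x \<in># other_eigs M"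
    hence "cmod x \<le> sigma_of M" unfolding sigma_of_def by (intro Max_ge) auto
    thus "cmod x < 1" using s by simp
  qed
  show ?thesis using prod_pos[OF inv bnd] unfolding c_of_def .
qed

theorem lemma6p4:
  fixes N l m n d :: nat and AL :: "real mat" and B C :: "real vec" and mu :: real
  assumes "N \<ge> 2"
    and "AL \<in> carrier_mat N N" and "B \<in> carrier_vec N" and "C \<in> carrier_vec N"
    and "0 < l" and "l < n" and "0 < m" and "m < n" and "coprime m n"
    and "d < n" and "(m * d) mod n = 1"
    and "shrinking_point N AL C B mu (Fword l m n) l n d"
    and "sigma_of (Mprod AL (AR_of N AL C) (Fword l m n) n) < 1"
  shows "c_of (Mprod AL (AR_of N AL C) (Fword l m n) n) \<in> \<real> \<and>
         Re (c_of (Mprod AL (AR_of N AL C) (Fword l m n) n)) > 0"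
proof -
  have "AR_of N AL C \<in> carrier_mat N N" using assms(2) unfolding AR_of_def by simp
  hence "Mprod AL (AR_of N AL C) (Fword l m n) n \<in> carrier_mat N N"
    using Mprod_carrier assms(2) by blast
  thus ?thesis using c_pos assms(13) by blast
qed

end
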